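(* Let $\Lambda_1\geq 0$ and $\Lambda_2>1$. Let $F(z)=|z|^2G(z)+H(z)$, $z\in\mathbb{D}$, where $G$ is analytic in $\mathbb{D}$ and $H$ is analytic in $\mathbb{D}$ with $H(0)=0$, $H'(0)=1$ (so $F$ is biharmonic in $\mathbb{D}$). (1) If $|G(z)+zG'(z)|\leq\Lambda_1$ and $|H'(z)|<\Lambda_2$ for all $z\in\mathbb{D}$, then $F$ is univalent in $\mathbb{D}_{\rho_1}$ and $F(\mathbb{D}_{\rho_1})\supseteq\mathbb{D}_{\sigma_1}$, where $$\rho_1=\frac{2\Lambda_2}{\Lambda_2(2\Lambda_1+\Lambda_2)+\sqrt{\Lambda_2^2(2\Lambda_1+\Lambda_2)^2-8\Lambda_1\Lambda_2}},\qquad \sigma_1=\Lambda_2^2\rho_1-\Lambda_1\rho_1^2+(\Lambda_2^3-\Lambda_2)\ln\Big(1-\frac{\rho_1}{\Lambda_2}\Big).$$ This result is sharp, with extremal function $F_1(z)=\Lambda_2^2 z-\Lambda_1|z|^2+(\Lambda_2^3-\Lambda_2)\ln(1-z/\Lambda_2)$. (2) If $|G(z)+zG'(z)|\leq\Lambda_1$ for all $z\in\mathbb{D}$, and either $|H(z)|<1$ for all $z\in\mathbb{D}$ or $|H'(z)|\leq 1$ for all $z\in\mathbb{D}$, then $F$ is univalent in $\mathbb{D}_{\rho_2}$ and $F(\mathbb{D}_{\rho_2})\supseteq\mathbb{D}_{\sigma_2}$, where $\rho_2=1$ if $\Lambda_1\leq 1/2$, $\rho_2=1/(2\Lambda_1)$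 if $\Lambda_1>1/2$, and $\sigma_2=\rho_2-\Lambda_1\rho_2^2$. This result is sharp, with extremal function $F_2(z)=\Lambda_1|z|^2+z$.
   Context: $\mathbb{D}=\{z:|z|<1\}$ and $\mathbb{D}_r=\{z\in\mathbb{C}:|z|<r\}$. "Sharp" means the radii $\rho_i$ and $\sigma_i$ cannot be replaced by larger numbers. *)

theory Defs
  imports "HOL-Analysis.Analysis"
begin

definition rho1 :: "real \<Rightarrow> real \<Rightarrow> real" where
  "rho1 L1 L2 = 2 * L2 /
     (L2 * (2 * L1 + L2) + sqrt (L2\<^sup>2 * (2 * L1 + L2)\<^sup>2 - 8 * L1 * L2))"

definition sigma1 :: "real \<Rightarrow> real \<Rightarrow> real" where
  "sigma1 L1 L2 = L2\<^sup>2 * rho1 L1 L2 - L1 * (rho1 L1 L2)\<^sup>2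
     + (L2 ^ 3 - L2) * ln (1 - rho1 L1 L2 / L2)"

definition F1_ext :: "real \<Rightarrow> real \<Rightarrow> complex \<Rightarrow> complex" where
  "F1_ext L1 L2 z = complex_of_real (L2\<^sup>2) * z - complex_of_real (L1 * (cmod z)\<^sup>2)
     + complex_of_real (L2 ^ 3 - L2) * Ln (1 - z / complex_of_real L2)"

definition rho2 :: "real \<Rightarrow> real" where
  "rho2 L1 = (if L1 \<le> 1/2 then 1 else 1 / (2 * L1))"

definition sigma2 :: "real \<Rightarrow> real" where
  "sigma2 L1 = rho2 L1 - L1 * (rho2 L1)\<^sup>2"

definition F2_ext :: "real \<Rightarrow> complex \<Rightarrow> complex" where
  "F2_ext L1 z = complex_of_real (L1 * (cmod z)\<^sup>2) + z"

end

theory Submission imports Defs "HOL-Complex_Analysis.Complex_Analysis" "HOL-Homology.Invariance_of_Domain" begin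

lemma lip_bound:
  fixes f :: "complex \<Rightarrow> complex"
  assumes "f holomorphic_on ball 0 1" "r < 1"
    and "\<And>z. norm z \<le> r \<Longrightarrow> norm (deriv f z) \<le> B"
    and "norm z1 \<le> r" "norm z2 \<le> r"
  shows "norm (f z1 - f z2) \<le> B * norm (z1 - z2)"
proof (rule field_differentiable_bound[where S="cball 0 r" and f' = "deriv f"])
  show "convex (cball (0::complex) r)" by simp
  fix z assume z: "z \<in> cball (0::complex) r"
  then have "z \<in> ball 0 1" using assms(2) by auto
  then show "(f has_field_derivative deriv f z) (at z within cball 0 r)"
    using holomorphic_derivI[OF assms(1)] by auto
  show "norm (deriv f z) \<le> B" using z assms(3) by auto
qed (use assms in auto)

lemma schwarz_pick_deriv:
  fixes H :: "complex \<Rightarrow> complex" and L2 :: real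
  assumes L2: "L2 > 1" and holH: "H holomorphic_on ball 0 1" and d0: "deriv H 0 = 1"
    and bd: "\<forall>z\<in>ball 0 1. cmod (deriv H z) < L2" and z: "norm z < 1"
  shows "cmod (deriv H z - 1) \<le> (L2^2 - 1) * norm z / (L2 - norm z)"
proof -
  define d where "d = deriv H"
  have hold: "d holomorphic_on ball 0 1" unfolding d_def using holH by (simp add: holomorphic_deriv)
  have nz: "of_real (L2^2) - d w \<noteq> 0" if "norm w < 1" for w
  proof
    assume "of_real (L2^2) - d w = 0"
    then have "d w = of_real (L2^2)" by simp
    then have "cmod (d w) = L2^2" using L2 by (simp add: norm_power)
    moreover have "cmod (d w) < L2" using bd that d_def by auto
    moreover have "L2 < L2^2" using L2 by (simp add: power2_eq_square)
    ultimately show False by simp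
  qed
  define phi where "phi w = of_real L2 * (d w - 1) / (of_real (L2^2) - d w)" for w
  have holphi: "phi holomorphic_on ball 0 1"
    unfolding phi_def using hold nz by (auto intro!: holomorphic_intros)
  have phi0: "phi 0 = 0" unfolding phi_def d_def using d0 by simp
  have phib: "norm (phi w) < 1" if w: "norm w < 1" for w
  proof -
    have dw: "cmod (d w) < L2" using bd w d_def by auto
    have key: "L2^2 * (cmod (d w - 1))^2 < (cmod (of_real (L2^2) - d w))^2"
    proof -
      have e1: "(cmod (d w - 1))^2 = (Re (d w) - 1)^2 + (Im (d w))^2"
        by (simp add: cmod_power2)
      have e2: "(cmod (of_real (L2^2) - d w))^2 = (L2^2 - Re (d w))^2 + (Im (d w))^2"
        by (simp add: cmod_power2)
      have e3: "(cmod (d w))^2 = (Re (d w))^2 + (Im (d w))^2" by (simp add: cmod_power2)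
      have "(cmod (d w))^2 < L2^2" using dw by (simp add: power_strict_mono)
      hence "(L2^2 - 1) * ((Re (d w))^2 + (Im (d w))^2) < (L2^2 - 1) * L2^2"
        using e3 L2 by (intro mult_strict_left_mono) (auto simp: power2_eq_square less_1_mult)
      thus ?thesis unfolding e1 e2 by (simp add: power2_eq_square algebra_simps)
    qed
    have "(cmod (of_real L2 * (d w - 1)))^2 < (cmod (of_real (L2^2) - d w))^2"
      using key L2 by (simp add: norm_mult power_mult_distrib)
    hence "cmod (of_real L2 * (d w - 1)) < cmod (of_real (L2^2) - d w)"
      by (meson norm_ge_zero power2_less_imp_less)
    thus ?thesis unfolding phi_def using nz[OF w] by (simp add: norm_divide divide_less_eq)
  qed
  have pz: "norm (phi z) \<le> norm z"
    using Schwarz_Lemma(1)[OF holphi phi0 phib z] .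
  define p where "p = phi z"
  have eq: "of_real L2 * (d z - 1) = p * (of_real (L2^2) - d z)"
    unfolding p_def phi_def using nz[OF z] by simp
  have den: "norm (of_real L2 + p) \<ge> L2 - norm z"
  proof -
    have "norm (of_real L2 + p) \<ge> norm (of_real L2 :: complex) - norm p" by (rule norm_diff_ineq)
    thus ?thesis using pz p_def L2 by simp
  qed
  have pos: "L2 - norm z > 0" using z L2 by simp
  have "(d z - 1) * (of_real L2 + p) = p * of_real (L2^2 - 1)"
    using eq by (simp add: algebra_simps)
  hence "norm (d z - 1) * norm (of_real L2 + p) = norm p * (L2^2 - 1)"
    using L2 by (metis abs_of_nonneg norm_mult norm_of_real less_imp_le one_le_power order_less_le_trans zero_less_one diff_ge_0_iff_ge)
  hence "norm (d z - 1) * (L2 - norm z) \<le> norm z * (L2^2 - 1)"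
  proof -
    assume h: "norm (d z - 1) * norm (of_real L2 + p) = norm p * (L2^2 - 1)"
    have "norm (d z - 1) * (L2 - norm z) \<le> norm (d z - 1) * norm (of_real L2 + p)"
      using den by (simp add: mult_left_mono)
    also have "\<dots> = norm p * (L2^2 - 1)" by (rule h)
    also have "\<dots> \<le> norm z * (L2^2 - 1)"
      using pz p_def L2 by (intro mult_right_mono) (auto simp: power2_eq_square less_1_mult less_imp_le)
    finally show ?thesis .
  qed
  thus ?thesis unfolding d_def using pos by (simp add: pos_le_divide_eq mult.commute)
qed

lemma cover:
  fixes F :: "complex \<Rightarrow> complex" and sg :: "real \<Rightarrow> real"
  assumes rp: "0 < \<rho>" "\<rho> \<le> 1" and contF: "continuous_on (ball 0 1) F"
    and inj: "inj_on F (ball 0 \<rho>)" and F0: "F 0 = 0"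
    and contS: "continuous_on {0..\<rho>} sg"
    and monoS: "\<And>x y. 0 \<le> x \<Longrightarrow> x \<le> y \<Longrightarrow> y \<le> \<rho> \<Longrightarrow> sg x \<le> sg y"
    and low: "\<And>z. norm z < \<rho> \<Longrightarrow> sg (norm z) \<le> norm (F z)"
  shows "ball 0 (sg \<rho>) \<subseteq> F ` ball 0 \<rho>"
proof
  fix w :: complex assume "w \<in> ball 0 (sg \<rho>)"
  hence w: "norm w < sg \<rho>" by simp
  obtain r where r: "0 \<le> r" "r < \<rho>" "norm w < sg r"
  proof (rule ccontr)
    assume "\<not> thesis"
    with that have le: "\<And>r. 0 \<le> r \<Longrightarrow> r < \<rho> \<Longrightarrow> sg r \<le> norm w" by (meson not_less)
    have lim: "(sg \<longlongrightarrow> sg \<rho>) (at_left \<rho>)"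
      using continuous_on_Icc_at_leftD[OF contS rp(1)] .
    have ev: "eventually (\<lambda>t. sg t \<le> norm w) (at_left \<rho>)"
      using eventually_at_left_real[OF rp(1)] by eventually_elim (auto intro: le)
    have "sg \<rho> \<le> norm w"
      using tendsto_upperbound[OF lim ev] by simp
    with w show False by simp
  qed
  define T where "T = ball (0::complex) (sg r)"
  define V where "V = F ` ball 0 \<rho>"
  define C where "C = F ` cball 0 r"
  have sub1: "ball (0::complex) \<rho> \<subseteq> ball 0 1" using rp by auto
  have cb: "cball (0::complex) r \<subseteq> ball 0 \<rho>" using r by auto
  have openV: "open V" unfolding V_def
    by (rule invariance_of_domain[OF continuous_on_subset[OF contF sub1] open_ball inj])
  have closedC: "closed C" unfolding C_def
    by (intro compact_imp_closed compact_continuous_image continuous_on_subset[OF contF])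
       (use cb sub1 in auto)
  have eq: "T \<inter> V = T \<inter> C"
  proof
    show "T \<inter> C \<subseteq> T \<inter> V" unfolding C_def V_def using cb by auto
    show "T \<inter> V \<subseteq> T \<inter> C"
    proof
      fix u assume "u \<in> T \<inter> V"
      then obtain z where z: "norm z < \<rho>" "u = F z" "norm u < sg r" unfolding T_def V_def by auto
      have "norm z \<le> r"
      proof (rule ccontr)
        assume "\<not> norm z \<le> r"
        hence "sg r \<le> sg (norm z)" using monoS[of r "norm z"] r z by auto
        moreover have "sg (norm z) \<le> norm u" using low[OF z(1)] z by simp
        ultimately show False using z by simp
      qed
      thus "u \<in> T \<inter> C" using \<open>u \<in> T \<inter> V\<close> z unfolding C_def by auto
    qed
  qed
  have "connected T" unfolding T_def by simp
  moreover have "openin (top_of_set T) (T \<inter> V)" using openV by auto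
  moreover have "closedin (top_of_set T) (T \<inter> V)" unfolding eq using closedC by (rule closedin_closed_Int)
  moreover have "0 \<in> T \<inter> V"
  proof -
    have "0 \<in> T" unfolding T_def using r(3) norm_ge_zero[of w] by (simp del: norm_ge_zero)
    moreover have "0 \<in> V" unfolding V_def using F0 rp by (auto intro!: image_eqI[of _ _ 0])
    ultimately show ?thesis by simp
  qed
  ultimately have "T \<inter> V = T" unfolding connected_clopen by blast
  moreover have "w \<in> T" unfolding T_def using r by simp
  ultimately show "w \<in> F ` ball 0 \<rho>" unfolding V_def by blast
qed

definition qp :: "real \<Rightarrow> real \<Rightarrow> real \<Rightarrow> real" where
  "qp L1 L2 t = 2 * L1 * t^2 - L2 * (2 * L1 + L2) * t + L2"

definition gf :: "real \<Rightarrow> real \<Rightarrow> real" where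
  "gf L2 t = (L2^2 - 1) * t / (L2 - t)"

definition SS :: "real \<Rightarrow> real \<Rightarrow> real" where
  "SS L1 L2 = sqrt (L2\<^sup>2 * (2 * L1 + L2)\<^sup>2 - 8 * L1 * L2)"

lemma rho1_facts:
  assumes L1: "L1 \<ge> 0" and L2: "L2 > 1"
  shows "SS L1 L2 > 0" "rho1 L1 L2 > 0" "rho1 L1 L2 < 1"
    "qp L1 L2 (rho1 L1 L2) = 0" "4 * L1 * rho1 L1 L2 = L2 * (2 * L1 + L2) - SS L1 L2"
proof -
  define b where "b = L2 * (2 * L1 + L2)"
  define D where "D = L2\<^sup>2 * (2 * L1 + L2)\<^sup>2 - 8 * L1 * L2"
  define S where "S = SS L1 L2"
  have Sd: "S = sqrt D" unfolding S_def SS_def D_def by simp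
  have bL: "L2 * L2 \<le> b" unfolding b_def using L1 L2 by (intro mult_left_mono) auto
  have b1: "b > 1" using bL L2 less_1_mult[of L2 L2] by simp
  have Dpos: "D > 0"
  proof (cases "L1 = 0")
    case True thus ?thesis unfolding D_def using L2 by simp
  next
    case False
    hence L1p: "L1 > 0" using L1 by simp
    have amgm: "(2 * L1 + L2)\<^sup>2 \<ge> 8 * L1 * L2"
      using sum_squares_ge_zero[of "2*L1 - L2" 0] by (simp add: power2_eq_square algebra_simps)
    have "L2\<^sup>2 * (2 * L1 + L2)\<^sup>2 \<ge> L2\<^sup>2 * (8 * L1 * L2)"
      using amgm by (simp add: mult_left_mono)
    moreover have "L2\<^sup>2 * (8 * L1 * L2) > 8 * L1 * L2"
      using L1p L2 by (simp add: power2_eq_square less_1_mult)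
    ultimately show ?thesis unfolding D_def by simp
  qed
  have Spos: "S > 0" unfolding Sd using Dpos by simp
  have S2a: "S^2 = D" unfolding Sd using Dpos by (simp only: real_sqrt_pow2 less_imp_le)
  have S2b: "D = b^2 - 8 * L1 * L2" unfolding D_def b_def by (simp only: power_mult_distrib)
  have S2: "S^2 = b^2 - 8 * L1 * L2" using S2a S2b by simp
  have bS: "b + S > 0" using b1 Spos by simp
  have rdef: "rho1 L1 L2 = 2 * L2 / (b + S)" unfolding rho1_def b_def S_def SS_def by simp
  show "SS L1 L2 > 0" using Spos S_def by simp
  show rp: "rho1 L1 L2 > 0" unfolding rdef using bS L2 by simp
  have "b + S > 2 * L2"
  proof (cases "2 * L2 - b \<le> 0")
    case True thus ?thesis using Spos by simp
  next
    case False
    have "b - L2 - 2 * L1 = (L2 - 1) * (2 * L1 + L2)" unfolding b_def by (simp add: algebra_simps)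
    also have "\<dots> > 0" using L1 L2 by simp
    finally have "b - L2 - 2 * L1 > 0" .
    hence "4 * L2 * (b - L2 - 2 * L1) > 0" using L2 by simp
    hence "(2 * L2 - b)^2 < D" using S2b by (simp add: power2_eq_square algebra_simps)
    hence "2 * L2 - b < sqrt D" by (rule real_less_rsqrt)
    thus ?thesis unfolding Sd by simp
  qed
  thus "rho1 L1 L2 < 1" unfolding rdef using bS by simp
  have rb: "rho1 L1 L2 * (b + S) = 2 * L2" unfolding rdef using bS by simp
  define r where "r = rho1 L1 L2"
  have rb': "r * (b + S) = 2 * L2" using rb r_def by simp
  have i1: "4 * L1 * r * (b + S) = 8 * L1 * L2"
  proof -
    have "4 * L1 * r * (b + S) = 4 * L1 * (r * (b + S))" by (simp only: mult.assoc)
    thus ?thesis unfolding rb' by simp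
  qed
  have i2: "(b - S) * (b + S) = 8 * L1 * L2"
  proof -
    have "(b - S) * (b + S) = b^2 - S^2" by (simp add: power2_eq_square algebra_simps)
    thus ?thesis using S2 by simp
  qed
  have "4 * L1 * r = b - S" using i1 i2 bS
    by (metis mult_right_cancel less_irrefl)
  thus "4 * L1 * rho1 L1 L2 = L2 * (2 * L1 + L2) - SS L1 L2" unfolding b_def S_def r_def .
  have qb: "qp L1 L2 t = 2 * L1 * t^2 - b * t + L2" for t unfolding qp_def b_def by simp
  have "qp L1 L2 r * (b + S)^2 = 0"
  proof -
    have "qp L1 L2 r * (b + S)^2
        = 2 * L1 * (r * (b + S))^2 - b * (r * (b + S)) * (b + S) + L2 * (b + S)^2"
      unfolding qb by (simp add: power2_eq_square algebra_simps)
    also have "\<dots> = 2 * L1 * (2 * L2)^2 - b * (2 * L2) * (b + S) + L2 * (b + S)^2" unfolding rb' ..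
    also have "\<dots> = L2 * (8 * L1 * L2 - b^2 + S^2)" by (simp add: power2_eq_square algebra_simps)
    also have "\<dots> = 0" using S2 by simp
    finally show ?thesis .
  qed
  hence "qp L1 L2 r = 0" using bS by simp
  thus "qp L1 L2 (rho1 L1 L2) = 0" using r_def by simp
qed


lemma qp_pos:
  assumes L1: "L1 \<ge> 0" and L2: "L2 > 1" and t: "0 \<le> t" "t < rho1 L1 L2"
  shows "qp L1 L2 t > 0"
proof -
  note f = rho1_facts[OF L1 L2]
  define r where "r = rho1 L1 L2"
  have "qp L1 L2 t = qp L1 L2 t - qp L1 L2 r" using f(4) r_def by simp
  also have "\<dots> = (t - r) * (2 * L1 * (t + r) - L2 * (2 * L1 + L2))"
    unfolding qp_def by (simp add: power2_eq_square algebra_simps)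
  finally have e: "qp L1 L2 t = (t - r) * (2 * L1 * (t + r) - L2 * (2 * L1 + L2))" .
  have "L1 * (t + r) \<le> L1 * (2 * r)" using L1 t r_def by (intro mult_left_mono) auto
  hence "2 * L1 * (t + r) \<le> 4 * L1 * r" by simp
  hence "2 * L1 * (t + r) - L2 * (2 * L1 + L2) < 0" using f(5) f(1) r_def by simp
  moreover have "t - r < 0" using t r_def by simp
  ultimately show ?thesis unfolding e by (simp add: mult_neg_neg)
qed

lemma qp_neg:
  assumes L1: "L1 \<ge> 0" and L2: "L2 > 1" and t: "rho1 L1 L2 < t" "2 * L1 * (t - rho1 L1 L2) < SS L1 L2"
  shows "qp L1 L2 t < 0"
proof -
  note f = rho1_facts[OF L1 L2]
  define r where "r = rho1 L1 L2"
  have "qp L1 L2 t = qp L1 L2 t - qp L1 L2 r" using f(4) r_def by simp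
  also have "\<dots> = (t - r) * (2 * L1 * (t + r) - L2 * (2 * L1 + L2))"
    unfolding qp_def by (simp add: power2_eq_square algebra_simps)
  finally have e: "qp L1 L2 t = (t - r) * (2 * L1 * (t + r) - L2 * (2 * L1 + L2))" .
  have "2 * L1 * (t + r) = 4 * L1 * r + 2 * L1 * (t - r)" by (simp add: algebra_simps)
  hence "2 * L1 * (t + r) - L2 * (2 * L1 + L2) < 0" using f(5) t r_def by simp
  moreover have "t - r > 0" using t r_def by simp
  ultimately show ?thesis unfolding e by (simp add: mult_pos_neg)
qed

lemma qp_gf:
  assumes "L2 > 1" "t < L2"
  shows "1 - gf L2 t - 2 * L1 * t = qp L1 L2 t / (L2 - t)"
  using assms unfolding gf_def qp_def by (simp add: field_simps power2_eq_square)

lemma gf_mono: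
  assumes "L2 > 1" "0 \<le> s" "s \<le> t" "t < L2"
  shows "gf L2 s \<le> gf L2 t"
proof -
  have "(L2^2 - 1) * s * (L2 - t) \<le> (L2^2 - 1) * t * (L2 - s)"
  proof -
    have "s * (L2 - t) \<le> t * (L2 - s)" using assms by (simp add: algebra_simps mult_right_mono)
    moreover have "L2^2 - 1 \<ge> 0" using assms by (simp add: power2_eq_square less_1_mult less_imp_le)
    ultimately show ?thesis by (metis mult.assoc mult_left_mono)
  qed
  thus ?thesis unfolding gf_def using assms by (simp add: divide_simps)
qed

lemma gf_strict:
  assumes "L2 > 1" "0 \<le> s" "s < t" "t < L2"
  shows "gf L2 s < gf L2 t"
proof -
  have "(L2^2 - 1) * (s * (L2 - t)) < (L2^2 - 1) * (t * (L2 - s))"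
  proof -
    have "s * (L2 - t) < t * (L2 - s)" using assms by (simp add: algebra_simps)
    moreover have "L2^2 - 1 > 0" using assms by (simp add: power2_eq_square less_1_mult)
    ultimately show ?thesis by simp
  qed
  thus ?thesis unfolding gf_def using assms by (simp add: divide_simps algebra_simps)
qed


lemma diff_est:
  fixes G H :: "complex \<Rightarrow> complex"
  shows "cmod ((complex_of_real ((cmod u)\<^sup>2) * G u + H u) - (complex_of_real ((cmod v)\<^sup>2) * G v + H v))
    \<ge> cmod (u - v) - cmod ((H u - u) - (H v - v))
       - (cmod (u - v) * cmod (u * G u) + cmod v * cmod (u * G u - v * G v))"
proof -
  define K where "K z = z * G z" for z
  have sq: "complex_of_real ((cmod z)\<^sup>2) * G z = cnj z * K z" for z
    unfolding complex_norm_square K_def by simp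
  define Fd where "Fd = (complex_of_real ((cmod u)\<^sup>2) * G u + H u) - (complex_of_real ((cmod v)\<^sup>2) * G v + H v)"
  define B where "B = (H u - u) - (H v - v)"
  define C where "C = (cnj u - cnj v) * K u + cnj v * (K u - K v)"
  have "u - v = Fd - B - C" unfolding Fd_def B_def C_def sq by (simp add: algebra_simps)
  hence "cmod (u - v) \<le> cmod Fd + cmod B + cmod C"
    by (metis (no_types, lifting) add.commute diff_diff_eq2 norm_diff_triangle_ineq norm_triangle_ineq4 order_trans add_mono order_refl norm_triangle_ineq)
  moreover have "cmod C \<le> cmod (u - v) * cmod (K u) + cmod v * cmod (K u - K v)"
  proof -
    have "cmod C \<le> cmod ((cnj u - cnj v) * K u) + cmod (cnj v * (K u - K v))"
      unfolding C_def by (rule norm_triangle_ineq)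
    also have "\<dots> = cmod (u - v) * cmod (K u) + cmod v * cmod (K u - K v)"
      by (simp add: norm_mult flip: complex_cnj_diff)
    finally show ?thesis .
  qed
  ultimately show ?thesis unfolding Fd_def B_def K_def by simp
qed

lemma K_deriv:
  fixes G :: "complex \<Rightarrow> complex"
  assumes "G holomorphic_on ball 0 1" "z \<in> ball 0 1"
  shows "deriv (\<lambda>z. z * G z) z = G z + z * deriv G z"
proof -
  have "((\<lambda>z. z * G z) has_field_derivative (1 * G z + deriv G z * z)) (at z)"
    by (rule DERIV_mult[OF DERIV_ident holomorphic_derivI[OF assms(1) open_ball assms(2)]])
  hence "deriv (\<lambda>z. z * G z) z = 1 * G z + deriv G z * z" by (rule DERIV_imp_deriv)
  thus ?thesis by (simp add: mult.commute)
qed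

lemma K_lip:
  fixes G :: "complex \<Rightarrow> complex"
  assumes holG: "G holomorphic_on ball 0 1" and bd: "\<forall>z\<in>ball 0 1. cmod (G z + z * deriv G z) \<le> L1"
    and r: "r < 1" and z: "cmod z1 \<le> r" "cmod z2 \<le> r"
  shows "cmod (z1 * G z1 - z2 * G z2) \<le> L1 * cmod (z1 - z2)"
proof (rule lip_bound[where f = "\<lambda>z. z * G z"])
  show "(\<lambda>z. z * G z) holomorphic_on ball 0 1" using holG by (auto intro!: holomorphic_intros)
  fix z :: complex assume "cmod z \<le> r"
  hence zb: "z \<in> ball 0 1" using r by simp
  show "cmod (deriv (\<lambda>z. z * G z) z) \<le> L1" using K_deriv[OF holG zb] bd zb by simp
qed (use assms in auto)

lemma K_bound:
  fixes G :: "complex \<Rightarrow> complex"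
  assumes holG: "G holomorphic_on ball 0 1" and bd: "\<forall>z\<in>ball 0 1. cmod (G z + z * deriv G z) \<le> L1"
    and z: "cmod z < 1"
  shows "cmod (z * G z) \<le> L1 * cmod z"
  using K_lip[OF holG bd z, of z 0] by simp

lemma E_lip:
  fixes H :: "complex \<Rightarrow> complex"
  assumes L2: "L2 > 1" and holH: "H holomorphic_on ball 0 1" and d0: "deriv H 0 = 1"
    and bd: "\<forall>z\<in>ball 0 1. cmod (deriv H z) < L2"
    and r: "0 \<le> r" "r < 1" and z: "cmod z1 \<le> r" "cmod z2 \<le> r"
  shows "cmod ((H z1 - z1) - (H z2 - z2)) \<le> gf L2 r * cmod (z1 - z2)"
proof (rule lip_bound[where f = "\<lambda>z. H z - z"])
  show "(\<lambda>z. H z - z) holomorphic_on ball 0 1" using holH by (auto intro!: holomorphic_intros)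
  fix z :: complex assume zr: "cmod z \<le> r"
  hence zb: "z \<in> ball 0 1" using r by simp
  have "((\<lambda>z. H z - z) has_field_derivative (deriv H z - 1)) (at z)"
    by (rule DERIV_diff[OF holomorphic_derivI[OF holH open_ball zb] DERIV_ident])
  hence "deriv (\<lambda>z. H z - z) z = deriv H z - 1" by (simp add: DERIV_imp_deriv)
  moreover have "cmod (deriv H z - 1) \<le> gf L2 (cmod z)"
    using schwarz_pick_deriv[OF L2 holH d0 bd] zb unfolding gf_def by simp
  moreover have "gf L2 (cmod z) \<le> gf L2 r" using gf_mono[OF L2 _ zr] r L2 by simp
  ultimately show "cmod (deriv (\<lambda>z. H z - z) z) \<le> gf L2 r" by simp
qed (use assms in auto)


lemma p1_inj:
  fixes G H :: "complex \<Rightarrow> complex"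
  assumes L1: "L1 \<ge> 0" and L2: "L2 > 1" and holG: "G holomorphic_on ball 0 1"
    and holH: "H holomorphic_on ball 0 1" and d0: "deriv H 0 = 1"
    and bdG: "\<forall>z\<in>ball 0 1. cmod (G z + z * deriv G z) \<le> L1"
    and bdH: "\<forall>z\<in>ball 0 1. cmod (deriv H z) < L2"
  shows "inj_on (\<lambda>z. complex_of_real ((cmod z)\<^sup>2) * G z + H z) (ball 0 (rho1 L1 L2))"
proof (rule inj_onI, rule ccontr)
  fix z1 z2 :: complex
  assume z1: "z1 \<in> ball 0 (rho1 L1 L2)" and z2: "z2 \<in> ball 0 (rho1 L1 L2)"
    and eq: "complex_of_real ((cmod z1)\<^sup>2) * G z1 + H z1 = complex_of_real ((cmod z2)\<^sup>2) * G z2 + H z2"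
    and ne: "z1 \<noteq> z2"
  note f = rho1_facts[OF L1 L2]
  define r where "r = max (cmod z1) (cmod z2)"
  have r0: "0 \<le> r" unfolding r_def by (simp add: le_max_iff_disj)
  have rr: "r < rho1 L1 L2" and r1: "r < 1" and rL: "r < L2"
    using z1 z2 f L2 unfolding r_def by auto
  have n1: "cmod z1 \<le> r" and n2: "cmod z2 \<le> r" unfolding r_def by auto
  define d where "d = cmod (z1 - z2)"
  have dpos: "d > 0" using ne d_def by simp
  have E: "cmod ((H z1 - z1) - (H z2 - z2)) \<le> gf L2 r * d"
    unfolding d_def by (rule E_lip[OF L2 holH d0 bdH r0 r1 n1 n2])
  have Kl: "cmod (z1 * G z1 - z2 * G z2) \<le> L1 * d"
    unfolding d_def by (rule K_lip[OF holG bdG r1 n1 n2])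
  have Kb: "cmod (z1 * G z1) \<le> L1 * r"
  proof -
    have "cmod (z1 * G z1) \<le> L1 * cmod z1" using K_bound[OF holG bdG, of z1] n1 r1 by simp
    also have "\<dots> \<le> L1 * r" using n1 L1 by (simp add: mult_left_mono)
    finally show ?thesis .
  qed
  have a1: "d * cmod (z1 * G z1) \<le> d * (L1 * r)" using Kb dpos by (simp add: mult_left_mono)
  have a2: "cmod z2 * cmod (z1 * G z1 - z2 * G z2) \<le> r * (L1 * d)"
    using Kl n2 r0 by (intro mult_mono) auto
  have pos: "1 - gf L2 r - 2 * L1 * r > 0"
    using qp_gf[OF L2 rL, of L1] qp_pos[OF L1 L2 r0 rr] rL by simp
  have a3: "d * (1 - gf L2 r - 2 * L1 * r) > 0" using pos dpos by simp
  have a3': "d * (1 - gf L2 r - 2 * L1 * r) = d - gf L2 r * d - d * (L1 * r) - r * (L1 * d)"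
    by (simp add: algebra_simps)
  have "cmod (z1 - z2) - cmod ((H z1 - z1) - (H z2 - z2))
       - (cmod (z1 - z2) * cmod (z1 * G z1) + cmod z2 * cmod (z1 * G z1 - z2 * G z2)) \<le> 0"
    using diff_est[where u=z1 and v=z2 and G=G and H=H] eq by simp
  thus False using E a1 a2 a3 a3' unfolding d_def[symmetric] by linarith
qed


lemma p1_sharp_pt:
  fixes G H :: "complex \<Rightarrow> complex"
  assumes L1: "L1 \<ge> 0" and L2: "L2 > 1" and holG: "G holomorphic_on ball 0 1"
    and holH: "H holomorphic_on ball 0 1" and d0: "deriv H 0 = 1"
    and bdG: "\<forall>z\<in>ball 0 1. cmod (G z + z * deriv G z) \<le> L1"
    and bdH: "\<forall>z\<in>ball 0 1. cmod (deriv H z) < L2"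
    and z: "cmod z < rho1 L1 L2"
  shows "complex_of_real ((cmod z)\<^sup>2) * G z + H z \<noteq>
         complex_of_real ((cmod (complex_of_real (rho1 L1 L2)))\<^sup>2) * G (complex_of_real (rho1 L1 L2)) + H (complex_of_real (rho1 L1 L2))"
proof
  note f = rho1_facts[OF L1 L2]
  define p where "p = rho1 L1 L2"
  define w where "w = complex_of_real p"
  have p0: "0 < p" and p1: "p < 1" and pL: "p < L2" using f L2 p_def by auto
  have nw: "cmod w = p" using p0 w_def by simp
  assume eq: "complex_of_real ((cmod z)\<^sup>2) * G z + H z =
         complex_of_real ((cmod (complex_of_real (rho1 L1 L2)))\<^sup>2) * G (complex_of_real (rho1 L1 L2)) + H (complex_of_real (rho1 L1 L2))"
  hence eq': "complex_of_real ((cmod z)\<^sup>2) * G z + H z = complex_of_real ((cmod w)\<^sup>2) * G w + H w"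
    unfolding w_def p_def .
  have ne: "z \<noteq> w" using z nw p_def by auto
  define d where "d = cmod (z - w)"
  have dpos: "d > 0" using ne d_def by simp
  define m where "m = (z + w) / 2"
  have nm: "cmod m < p"
  proof -
    have "cmod m \<le> (cmod z + cmod w) / 2" unfolding m_def using norm_triangle_ineq[of z w] by simp
    thus ?thesis using z nw p_def by simp
  qed
  define r1 where "r1 = max (cmod z) (cmod m)"
  have r10: "0 \<le> r1" unfolding r1_def by (simp add: le_max_iff_disj)
  have r1p: "r1 < p" using z nm p_def unfolding r1_def by auto
  have zm: "z - m = (z - w) / 2" unfolding m_def by (simp add: field_simps)
  have dz: "cmod (z - m) = d / 2" unfolding zm d_def by (simp add: norm_divide)
  have mw: "m - w = (z - w) / 2" unfolding m_def by (simp add: field_simps)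
  have dw: "cmod (m - w) = d / 2" unfolding mw d_def by (simp add: norm_divide)
  have E1: "cmod ((H z - z) - (H m - m)) \<le> gf L2 r1 * (d / 2)"
    using E_lip[OF L2 holH d0 bdH r10, of z m] r1p p1 dz unfolding r1_def by auto
  have E2: "cmod ((H m - m) - (H w - w)) \<le> gf L2 p * (d / 2)"
    using E_lip[OF L2 holH d0 bdH _ p1, of m w] nm nw p0 dw by auto
  have gl: "gf L2 r1 < gf L2 p" using gf_strict[OF L2 r10 r1p pL] .
  have E: "cmod ((H z - z) - (H w - w)) < gf L2 p * d"
  proof -
    have sp: "(H z - z) - (H w - w) = ((H z - z) - (H m - m)) + ((H m - m) - (H w - w))" by simp
    have "cmod ((H z - z) - (H w - w)) \<le> cmod ((H z - z) - (H m - m)) + cmod ((H m - m) - (H w - w))"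
      unfolding sp by (rule norm_triangle_ineq)
    also have "\<dots> \<le> gf L2 r1 * (d / 2) + gf L2 p * (d / 2)" using E1 E2 by simp
    also have "\<dots> < gf L2 p * (d / 2) + gf L2 p * (d / 2)"
    proof -
      have "gf L2 r1 * (d / 2) < gf L2 p * (d / 2)" by (rule mult_strict_right_mono[OF gl]) (use dpos in simp)
      thus ?thesis by linarith
    qed
    finally show ?thesis by (simp add: mult.commute)
  qed
  have Kl: "cmod (z * G z - w * G w) \<le> L1 * d"
    unfolding d_def using K_lip[OF holG bdG p1, of z w] z nw p_def by simp
  have Kb: "cmod (z * G z) \<le> L1 * p"
  proof -
    have "cmod (z * G z) \<le> L1 * cmod z" using K_bound[OF holG bdG, of z] z p1 p_def by simp
    also have "\<dots> \<le> L1 * p" using z L1 p_def by (simp add: mult_left_mono)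
    finally show ?thesis .
  qed
  have a1: "d * cmod (z * G z) \<le> d * (L1 * p)" using Kb dpos by (simp add: mult_left_mono)
  have a2: "cmod w * cmod (z * G z - w * G w) \<le> p * (L1 * d)"
    using Kl nw p0 by (simp add: mult_left_mono)
  have zero: "1 - gf L2 p - 2 * L1 * p = 0"
    using qp_gf[OF L2 pL, of L1] f(4) p_def by simp
  have a3: "d * (1 - gf L2 p - 2 * L1 * p) = d - gf L2 p * d - d * (L1 * p) - p * (L1 * d)"
    by (simp add: algebra_simps)
  have "cmod (z - w) - cmod ((H z - z) - (H w - w))
       - (cmod (z - w) * cmod (z * G z) + cmod w * cmod (z * G z - w * G w)) \<le> 0"
    using diff_est[where u=z and v=w and G=G and H=H] eq' by simp
  moreover have "d - gf L2 p * d - d * (L1 * p) - p * (L1 * d) = 0" using a3 zero by simp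
  ultimately show False using E a1 a2 unfolding d_def[symmetric] by linarith
qed


definition sH :: "real \<Rightarrow> real \<Rightarrow> real" where
  "sH L2 t = L2^2 * t + (L2^3 - L2) * ln (1 - t / L2)"

definition sg1 :: "real \<Rightarrow> real \<Rightarrow> real \<Rightarrow> real" where
  "sg1 L1 L2 t = sH L2 t - L1 * t^2"

lemma sigma1_sg1: "sigma1 L1 L2 = sg1 L1 L2 (rho1 L1 L2)"
  unfolding sigma1_def sg1_def sH_def by simp

lemma sH_deriv:
  assumes L2: "L2 > 1" and t: "t < L2"
  shows "(sH L2 has_real_derivative (1 - gf L2 t)) (at t)"
proof -
  have pos: "1 - t / L2 > 0" using L2 t by (simp add: field_simps)
  have g: "((\<lambda>t. 1 - t / L2) has_real_derivative (- (1 / L2))) (at t)"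
    using DERIV_diff[OF DERIV_const[of 1] DERIV_cdivide[OF DERIV_ident, of L2]] by simp
  have l: "((\<lambda>t. ln (1 - t / L2)) has_real_derivative (inverse (1 - t / L2) * (- (1 / L2)))) (at t)"
    by (rule DERIV_chain2[OF DERIV_ln[OF pos] g])
  have "((\<lambda>t. L2^2 * t + (L2^3 - L2) * ln (1 - t / L2)) has_real_derivative
          (L2^2 * 1 + (L2^3 - L2) * (inverse (1 - t / L2) * (- (1 / L2))))) (at t)"
    by (rule DERIV_add[OF DERIV_cmult[OF DERIV_ident] DERIV_cmult[OF l]])
  hence "(sH L2 has_real_derivative (L2^2 * 1 + (L2^3 - L2) * (inverse (1 - t / L2) * (- (1 / L2))))) (at t)"
    unfolding sH_def[abs_def] .
  moreover have "L2^2 * 1 + (L2^3 - L2) * (inverse (1 - t / L2) * (- (1 / L2))) = 1 - gf L2 t"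
    unfolding gf_def using L2 t by (simp add: field_simps power2_eq_square power3_eq_cube)
  ultimately show ?thesis by simp
qed

lemma sg1_deriv:
  assumes L2: "L2 > 1" and t: "t < L2"
  shows "(sg1 L1 L2 has_real_derivative (qp L1 L2 t / (L2 - t))) (at t)"
proof -
  have "(sg1 L1 L2 has_real_derivative ((1 - gf L2 t) - L1 * (2 * t))) (at t)"
    unfolding sg1_def[abs_def]
    by (rule derivative_eq_intros sH_deriv[OF L2 t] refl | simp)+
  moreover have "qp L1 L2 t / (L2 - t) = (1 - gf L2 t) - L1 * (2 * t)"
    using qp_gf[OF L2 t, of L1] by simp
  ultimately show ?thesis by simp
qed

lemma H_lower:
  fixes H :: "complex \<Rightarrow> complex"
  assumes L2: "L2 > 1" and holH: "H holomorphic_on ball 0 1" and H0: "H 0 = 0" and d0: "deriv H 0 = 1"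
    and bdH: "\<forall>z\<in>ball 0 1. cmod (deriv H z) < L2" and z: "cmod z < 1"
  shows "sH L2 (cmod z) \<le> cmod (H z)"
proof (cases "z = 0")
  case True thus ?thesis using H0 unfolding sH_def by simp
next
  case False
  define e where "e = z / of_real (cmod z)"
  have ne: "cmod e = 1" unfolding e_def using False by (simp add: norm_divide)
  have ce: "cnj e * e = 1"
    using ne complex_norm_square[of e] by (simp add: mult.commute)
  define psi where "psi t = Re (cnj e * H (of_real t * e))" for t :: real
  define f where "f t = psi t - sH L2 t" for t
  have der: "(f has_real_derivative (Re (deriv H (of_real t * e)) - (1 - gf L2 t))) (at t)"
    if t: "0 \<le> t" "t \<le> cmod z" for t
  proof -
    have tb: "of_real t * e \<in> ball 0 1" using t z ne by (simp add: norm_mult)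
    have tL: "t < L2" using t z L2 by simp
    have hH: "(H has_field_derivative deriv H (of_real t * e)) (at (of_real t * e))"
      using holomorphic_derivI[OF holH open_ball tb, where T=UNIV] by simp
    have hg: "((\<lambda>w. w * e) has_field_derivative e) (at (of_real t))"
      using DERIV_cmult_right[OF DERIV_ident, of e "of_real t"] by simp
    have h0: "((\<lambda>w. H (w * e)) has_field_derivative (deriv H (of_real t * e) * e)) (at (of_real t))"
      using DERIV_chain2[OF hH hg] by simp
    have h1: "((\<lambda>w. cnj e * H (w * e)) has_field_derivative (cnj e * (deriv H (of_real t * e) * e))) (at (of_real t))"
      by (rule DERIV_cmult[OF h0])
    have h2: "((\<lambda>x. cnj e * H (of_real x * e)) has_vector_derivative (cnj e * (deriv H (of_real t * e) * e))) (at t)"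
      by (rule has_vector_derivative_real_field[OF h1])
    have h3: "(psi has_real_derivative Re (cnj e * (deriv H (of_real t * e) * e))) (at t)"
      unfolding psi_def by (rule has_field_derivative_Re[OF h2])
    have eq: "cnj e * (deriv H (of_real t * e) * e) = deriv H (of_real t * e)"
      using ce by (simp add: algebra_simps)
    have h4: "(psi has_real_derivative Re (deriv H (of_real t * e))) (at t)" using h3 by (simp only: eq)
    show ?thesis unfolding f_def[abs_def] by (rule DERIV_diff[OF h4 sH_deriv[OF L2 tL]])
  qed
  have "f 0 \<le> f (cmod z)"
  proof (rule DERIV_nonneg_imp_increasing_open[where f=f and a=0 and b="cmod z"])
    show "0 \<le> cmod z" by simp
    fix t assume t: "0 < t" "t < cmod z"
    have tb: "of_real t * e \<in> ball 0 1" using t z ne by (simp add: norm_mult)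
    have "cmod (deriv H (of_real t * e) - 1) \<le> gf L2 t"
      using schwarz_pick_deriv[OF L2 holH d0 bdH, of "of_real t * e"] tb t ne
      unfolding gf_def by (simp add: norm_mult)
    moreover have "1 - cmod (deriv H (of_real t * e) - 1) \<le> Re (deriv H (of_real t * e))"
      using complex_Re_le_cmod[of "1 - deriv H (of_real t * e)"] by (simp add: norm_minus_commute)
    ultimately have "Re (deriv H (of_real t * e)) - (1 - gf L2 t) \<ge> 0" by simp
    thus "\<exists>y. (f has_real_derivative y) (at t) \<and> 0 \<le> y" using der[of t] t by auto
  next
    show "continuous_on {0..cmod z} f"
      by (rule continuous_at_imp_continuous_on) (auto intro: DERIV_isCont[OF der])
  qed
  moreover have "f 0 = 0" unfolding f_def psi_def sH_def using H0 by simp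
  moreover have "of_real (cmod z) * e = z" unfolding e_def using False by simp
  ultimately have "sH L2 (cmod z) \<le> Re (cnj e * H z)" unfolding f_def psi_def by simp
  also have "\<dots> \<le> cmod (cnj e * H z)" by (rule complex_Re_le_cmod)
  also have "\<dots> = cmod (H z)" using ne by (simp add: norm_mult)
  finally show ?thesis .
qed


lemma sg1_cont:
  assumes L2: "L2 > 1" and "b < L2"
  shows "continuous_on {a..b} (sg1 L1 L2)"
  by (rule continuous_at_imp_continuous_on) (use assms in \<open>auto intro: DERIV_isCont[OF sg1_deriv]\<close>)

lemma sg1_mono:
  assumes L1: "L1 \<ge> 0" and L2: "L2 > 1" and xy: "0 \<le> x" "x \<le> y" "y \<le> rho1 L1 L2"
  shows "sg1 L1 L2 x \<le> sg1 L1 L2 y"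
proof (rule DERIV_nonneg_imp_increasing_open[where f="sg1 L1 L2" and a=x and b=y])
  note f = rho1_facts[OF L1 L2]
  show "x \<le> y" by fact
  fix t assume t: "x < t" "t < y"
  have tL: "t < L2" using t xy f L2 by simp
  have "qp L1 L2 t > 0" using qp_pos[OF L1 L2, of t] t xy by simp
  hence "qp L1 L2 t / (L2 - t) \<ge> 0" using tL by simp
  thus "\<exists>d. (sg1 L1 L2 has_real_derivative d) (at t) \<and> 0 \<le> d" using sg1_deriv[OF L2 tL] by blast
next
  note f = rho1_facts[OF L1 L2]
  show "continuous_on {x..y} (sg1 L1 L2)" using sg1_cont[OF L2] xy f L2 by simp
qed

lemma F_cont:
  fixes G H :: "complex \<Rightarrow> complex"
  assumes "G holomorphic_on ball 0 1" "H holomorphic_on ball 0 1"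
  shows "continuous_on (ball 0 1) (\<lambda>z. complex_of_real ((cmod z)\<^sup>2) * G z + H z)"
  using holomorphic_on_imp_continuous_on[OF assms(1)] holomorphic_on_imp_continuous_on[OF assms(2)]
  by (intro continuous_intros) auto

lemma F_lower_gen:
  fixes G H :: "complex \<Rightarrow> complex"
  assumes holG: "G holomorphic_on ball 0 1" and bdG: "\<forall>z\<in>ball 0 1. cmod (G z + z * deriv G z) \<le> L1"
    and z: "cmod z < 1"
  shows "cmod (H z) - L1 * (cmod z)^2 \<le> cmod (complex_of_real ((cmod z)\<^sup>2) * G z + H z)"
proof -
  have "cmod (complex_of_real ((cmod z)\<^sup>2) * G z) = cmod z * cmod (z * G z)"
    by (simp add: norm_mult power2_eq_square)
  also have "\<dots> \<le> cmod z * (L1 * cmod z)"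
    using K_bound[OF holG bdG z] by (simp add: mult_left_mono)
  finally have a: "cmod (complex_of_real ((cmod z)\<^sup>2) * G z) \<le> L1 * (cmod z)^2"
    by (simp add: power2_eq_square algebra_simps)
  have "cmod (H z) \<le> cmod (complex_of_real ((cmod z)\<^sup>2) * G z + H z) + cmod (complex_of_real ((cmod z)\<^sup>2) * G z)"
    using norm_triangle_ineq4[of "complex_of_real ((cmod z)\<^sup>2) * G z + H z" "complex_of_real ((cmod z)\<^sup>2) * G z"]
    by simp
  thus ?thesis using a by simp
qed

lemma part1_main:
  fixes G H :: "complex \<Rightarrow> complex"
  assumes L1: "L1 \<ge> 0" and L2: "L2 > 1" and holG: "G holomorphic_on ball 0 1"
    and holH: "H holomorphic_on ball 0 1" and H0: "H 0 = 0" and d0: "deriv H 0 = 1"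
    and bdG: "\<forall>z\<in>ball 0 1. cmod (G z + z * deriv G z) \<le> L1"
    and bdH: "\<forall>z\<in>ball 0 1. cmod (deriv H z) < L2"
  shows "inj_on (\<lambda>z. complex_of_real ((cmod z)\<^sup>2) * G z + H z) (ball 0 (rho1 L1 L2)) \<and>
           ball 0 (sigma1 L1 L2) \<subseteq> (\<lambda>z. complex_of_real ((cmod z)\<^sup>2) * G z + H z) ` ball 0 (rho1 L1 L2)"
proof
  note f = rho1_facts[OF L1 L2]
  show inj: "inj_on (\<lambda>z. complex_of_real ((cmod z)\<^sup>2) * G z + H z) (ball 0 (rho1 L1 L2))"
    by (rule p1_inj[OF L1 L2 holG holH d0 bdG bdH])
  show "ball 0 (sigma1 L1 L2) \<subseteq> (\<lambda>z. complex_of_real ((cmod z)\<^sup>2) * G z + H z) ` ball 0 (rho1 L1 L2)"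
    unfolding sigma1_sg1
  proof (rule cover[OF _ _ F_cont[OF holG holH] inj])
    show "0 < rho1 L1 L2" "rho1 L1 L2 \<le> 1" using f by auto
    show "complex_of_real ((cmod 0)\<^sup>2) * G 0 + H 0 = 0" using H0 by simp
    show "continuous_on {0..rho1 L1 L2} (sg1 L1 L2)" using sg1_cont[OF L2] f L2 by simp
    show "sg1 L1 L2 x \<le> sg1 L1 L2 y" if "0 \<le> x" "x \<le> y" "y \<le> rho1 L1 L2" for x y
      using sg1_mono[OF L1 L2 that] .
    fix z :: complex assume z: "cmod z < rho1 L1 L2"
    hence z1: "cmod z < 1" using f by simp
    have "sg1 L1 L2 (cmod z) = sH L2 (cmod z) - L1 * (cmod z)^2" unfolding sg1_def ..
    also have "\<dots> \<le> cmod (H z) - L1 * (cmod z)^2"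
      using H_lower[OF L2 holH H0 d0 bdH z1] by simp
    also have "\<dots> \<le> cmod (complex_of_real ((cmod z)\<^sup>2) * G z + H z)"
      by (rule F_lower_gen[OF holG bdG z1])
    finally show "sg1 L1 L2 (cmod z) \<le> cmod (complex_of_real ((cmod z)\<^sup>2) * G z + H z)" .
  qed
qed


lemma H1_deriv:
  fixes L2 :: real
  assumes L2: "L2 > 1" and z: "cmod z < 1"
  shows "((\<lambda>z. complex_of_real (L2\<^sup>2) * z + complex_of_real (L2 ^ 3 - L2) * Ln (1 - z / complex_of_real L2))
          has_field_derivative (of_real L2 * (1 - of_real L2 * z) / (of_real L2 - z))) (at z)"
proof -
  have L2ne: "complex_of_real L2 \<noteq> 0" using L2 by simp
  have Rez: "Re z < L2" using z L2 complex_Re_le_cmod[of z] by linarith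
  have re: "Re (1 - z / complex_of_real L2) > 0" using Rez L2 by (simp add: field_simps)
  hence np: "1 - z / complex_of_real L2 \<notin> \<real>\<^sub>\<le>\<^sub>0" by (auto simp: complex_nonpos_Reals_iff)
  have ne: "1 - z / complex_of_real L2 \<noteq> 0" using re by auto
  have ne2: "complex_of_real L2 - z \<noteq> 0" using Rez by auto
  have g: "((\<lambda>z. 1 - z / complex_of_real L2) has_field_derivative (- (1 / of_real L2))) (at z)"
    using DERIV_diff[OF DERIV_const[of 1] DERIV_cdivide[OF DERIV_ident, of "of_real L2"]] by simp
  have l: "((\<lambda>z. Ln (1 - z / complex_of_real L2)) has_field_derivative (inverse (1 - z / of_real L2) * (- (1 / of_real L2)))) (at z)"
    by (rule DERIV_chain2[OF has_field_derivative_Ln[OF np] g])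
  have d: "((\<lambda>z. complex_of_real (L2\<^sup>2) * z + complex_of_real (L2 ^ 3 - L2) * Ln (1 - z / complex_of_real L2))
          has_field_derivative (of_real (L2\<^sup>2) * 1 + of_real (L2 ^ 3 - L2) * (inverse (1 - z / of_real L2) * (- (1 / of_real L2))))) (at z)"
    by (rule DERIV_add[OF DERIV_cmult[OF DERIV_ident] DERIV_cmult[OF l]])
  have "of_real (L2\<^sup>2) * 1 + of_real (L2 ^ 3 - L2) * (inverse (1 - z / of_real L2) * (- (1 / of_real L2)))
        = of_real L2 * (1 - of_real L2 * z) / (of_real L2 - z)"
  proof -
    have e: "inverse (1 - z / of_real L2) = of_real L2 / (of_real L2 - z)"
      using L2ne ne2 by (simp add: field_simps)
    show ?thesis unfolding e using L2ne ne2
      by (simp add: field_simps power2_eq_square power3_eq_cube)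
  qed
  thus ?thesis using d by simp
qed

lemma F1_facts:
  fixes L1 L2 :: real
  assumes L1: "L1 \<ge> 0" and L2: "L2 > 1"
  defines "G1 \<equiv> (\<lambda>z::complex. - complex_of_real L1)"
    and "H1 \<equiv> (\<lambda>z. complex_of_real (L2\<^sup>2) * z + complex_of_real (L2 ^ 3 - L2) * Ln (1 - z / complex_of_real L2))"
  shows "G1 holomorphic_on ball 0 1 \<and> H1 holomorphic_on ball 0 1 \<and> H1 0 = 0 \<and> deriv H1 0 = 1 \<and>
        (\<forall>z\<in>ball 0 1. cmod (G1 z + z * deriv G1 z) \<le> L1) \<and>
        (\<forall>z\<in>ball 0 1. cmod (deriv H1 z) < L2) \<and>
        (\<forall>z. F1_ext L1 L2 z = complex_of_real ((cmod z)\<^sup>2) * G1 z + H1 z)"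
proof (intro conjI ballI allI)
  have dH: "deriv H1 z = of_real L2 * (1 - of_real L2 * z) / (of_real L2 - z)" if "cmod z < 1" for z
    unfolding H1_def using H1_deriv[OF L2 that] by (rule DERIV_imp_deriv)
  show "G1 holomorphic_on ball 0 1" unfolding G1_def by simp
  show "H1 holomorphic_on ball 0 1"
    unfolding holomorphic_on_def field_differentiable_def
  proof
    fix z :: complex assume "z \<in> ball 0 1"
    hence "cmod z < 1" by simp
    from has_field_derivative_at_within[OF H1_deriv[OF L2 this]]
    show "\<exists>f'. (H1 has_field_derivative f') (at z within ball 0 1)" unfolding H1_def by blast
  qed
  show "H1 0 = 0" unfolding H1_def by simp
  show "deriv H1 0 = 1" using dH[of 0] L2 by simp
  show "cmod (G1 z + z * deriv G1 z) \<le> L1" for z unfolding G1_def using L1 by simp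
  show "cmod (deriv H1 z) < L2" if "z \<in> ball 0 1" for z
  proof -
    have z: "cmod z < 1" using that by simp
    have Rez: "Re z < L2" using z L2 complex_Re_le_cmod[of z] by linarith
    have ne2: "complex_of_real L2 - z \<noteq> 0" using Rez by auto
    have "(cmod (1 - of_real L2 * z))^2 < (cmod (of_real L2 - z))^2"
    proof -
      have a: "(cmod (1 - of_real L2 * z))^2 = (1 - L2 * Re z)^2 + (L2 * Im z)^2" by (simp add: cmod_power2)
      have b: "(cmod (of_real L2 - z))^2 = (L2 - Re z)^2 + (Im z)^2" by (simp add: cmod_power2)
      have c: "(Re z)^2 + (Im z)^2 < 1" using z by (simp add: cmod_power2[symmetric] power_less_one_iff)
      have "(L2^2 - 1) * ((Re z)^2 + (Im z)^2) < (L2^2 - 1) * 1"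
        using c L2 by (intro mult_strict_left_mono) (auto simp: power2_eq_square less_1_mult)
      thus ?thesis unfolding a b by (simp add: power2_eq_square algebra_simps)
    qed
    hence lt: "cmod (1 - of_real L2 * z) < cmod (of_real L2 - z)"
      by (meson norm_ge_zero power2_less_imp_less)
    have "cmod (deriv H1 z) = L2 * cmod (1 - of_real L2 * z) / cmod (of_real L2 - z)"
      using dH[OF z] L2 by (simp add: norm_mult norm_divide)
    also have "\<dots> < L2" using lt L2 ne2 by (simp add: divide_less_eq)
    finally show ?thesis .
  qed
  show "F1_ext L1 L2 z = complex_of_real ((cmod z)\<^sup>2) * G1 z + H1 z" for z
    unfolding F1_ext_def G1_def H1_def by (simp add: algebra_simps)
qed


lemma F1_real:
  assumes L2: "L2 > 1" and x: "0 \<le> x" "x < L2"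
  shows "F1_ext L1 L2 (complex_of_real x) = complex_of_real (sg1 L1 L2 x)"
proof -
  have pos: "1 - x / L2 > 0" using x L2 by (simp add: field_simps)
  have "1 - complex_of_real x / complex_of_real L2 = complex_of_real (1 - x / L2)" by simp
  hence "Ln (1 - complex_of_real x / complex_of_real L2) = complex_of_real (ln (1 - x / L2))"
    using Ln_of_real[OF pos] by simp
  thus ?thesis unfolding F1_ext_def sg1_def sH_def using x by (simp add: power2_eq_square)
qed

lemma sigma1_pos:
  assumes L1: "L1 \<ge> 0" and L2: "L2 > 1"
  shows "sg1 L1 L2 (rho1 L1 L2) > 0"
proof -
  note f = rho1_facts[OF L1 L2]
  obtain \<xi> where xi: "0 < \<xi>" "\<xi> < rho1 L1 L2"
    and eq: "sg1 L1 L2 (rho1 L1 L2) - sg1 L1 L2 0 = (rho1 L1 L2 - 0) * (qp L1 L2 \<xi> / (L2 - \<xi>))"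
    using MVT2[OF f(2), of "sg1 L1 L2" "\<lambda>t. qp L1 L2 t / (L2 - t)"] sg1_deriv[OF L2] f L2 by force
  have "qp L1 L2 \<xi> > 0" using qp_pos[OF L1 L2, of \<xi>] xi by simp
  moreover have "L2 - \<xi> > 0" using xi f L2 by simp
  moreover have "sg1 L1 L2 0 = 0" unfolding sg1_def sH_def by simp
  ultimately show ?thesis using eq f(2) by simp
qed

lemma F1_noninj:
  assumes L1: "L1 \<ge> 0" and L2: "L2 > 1" and r: "rho1 L1 L2 < r" "r \<le> 1"
  shows "\<not> inj_on (F1_ext L1 L2) (ball 0 r)"
proof
  assume inj: "inj_on (F1_ext L1 L2) (ball 0 r)"
  note f = rho1_facts[OF L1 L2]
  define p where "p = rho1 L1 L2"
  have sp: "sg1 L1 L2 p > 0" using sigma1_pos[OF L1 L2] p_def by simp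
  have lim: "(sg1 L1 L2 \<longlongrightarrow> sg1 L1 L2 p) (at_right p)"
    using continuous_on_Icc_at_rightD[OF sg1_cont[OF L2, of 1 p L1]] f L2 p_def by simp
  have ev1: "eventually (\<lambda>x. sg1 L1 L2 x > 0) (at_right p)"
    using order_tendstoD(1)[OF lim sp] .
  have ev2: "eventually (\<lambda>x. x \<in> {p<..<min r (p + SS L1 L2 / (2 * L1 + 1))}) (at_right p)"
  proof (intro eventually_at_right_real)
    have "SS L1 L2 / (2 * L1 + 1) > 0" using f L1 by simp
    thus "p < min r (p + SS L1 L2 / (2 * L1 + 1))" using r p_def by simp
  qed
  obtain x1 where x1: "sg1 L1 L2 x1 > 0" "x1 \<in> {p<..<min r (p + SS L1 L2 / (2 * L1 + 1))}"
    using eventually_happens'[OF _ eventually_conj[OF ev1 ev2]] by auto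
  have x1p: "p < x1" and x1r: "x1 < r" and x1S: "x1 - p < SS L1 L2 / (2 * L1 + 1)" using x1 by auto
  have x1L: "x1 < L2" using x1r r L2 by simp
  have S2: "2 * L1 * (x1 - p) < SS L1 L2"
  proof -
    have "2 * L1 * (x1 - p) \<le> (2 * L1 + 1) * (x1 - p)" using x1p by (simp add: mult_right_mono)
    also have "\<dots> < SS L1 L2" using x1S L1 by (simp add: pos_less_divide_eq mult.commute)
    finally show ?thesis .
  qed
  obtain \<xi> where xi: "p < \<xi>" "\<xi> < x1"
    and eq: "sg1 L1 L2 x1 - sg1 L1 L2 p = (x1 - p) * (qp L1 L2 \<xi> / (L2 - \<xi>))"
    using MVT2[OF x1p, of "sg1 L1 L2" "\<lambda>t. qp L1 L2 t / (L2 - t)"] sg1_deriv[OF L2] x1L by force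
  have "2 * L1 * (\<xi> - p) \<le> 2 * L1 * (x1 - p)" using xi L1 by (simp add: mult_left_mono)
  hence "qp L1 L2 \<xi> < 0" using qp_neg[OF L1 L2, of \<xi>] xi S2 p_def by simp
  moreover have "L2 - \<xi> > 0" using xi x1L by simp
  ultimately have "qp L1 L2 \<xi> / (L2 - \<xi>) < 0" by (simp add: divide_neg_pos)
  hence "(x1 - p) * (qp L1 L2 \<xi> / (L2 - \<xi>)) < 0" using x1p by (intro mult_pos_neg) auto
  hence lt: "sg1 L1 L2 x1 < sg1 L1 L2 p" using eq by linarith
  have s0: "sg1 L1 L2 0 = 0" unfolding sg1_def sH_def by simp
  obtain x0 where x0: "0 \<le> x0" "x0 \<le> p" "sg1 L1 L2 x0 = sg1 L1 L2 x1"
    using IVT'[of "sg1 L1 L2" 0 "sg1 L1 L2 x1" p] s0 x1(1) lt f p_def sg1_cont[OF L2, of p 0 L1] L2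
    by auto
  have x0L: "x0 < L2" using x0 f p_def L2 by simp
  have "F1_ext L1 L2 (of_real x0) = F1_ext L1 L2 (of_real x1)"
    using F1_real[OF L2 x0(1) x0L] F1_real[OF L2 _ x1L] x0(3) x1p x0 by simp
  moreover have "of_real x0 \<in> ball (0::complex) r" "of_real x1 \<in> ball (0::complex) r"
    using x0 x1p x1r r by auto
  ultimately have "(of_real x0 :: complex) = of_real x1" using inj by (meson inj_onD)
  thus False using x0 x1p by simp
qed

lemma F1_notcover:
  assumes L1: "L1 \<ge> 0" and L2: "L2 > 1" and s: "sigma1 L1 L2 < s"
  shows "\<not> ball 0 s \<subseteq> F1_ext L1 L2 ` ball 0 (rho1 L1 L2)"
proof
  assume sub: "ball 0 s \<subseteq> F1_ext L1 L2 ` ball 0 (rho1 L1 L2)"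
  note f = rho1_facts[OF L1 L2]
  define p where "p = rho1 L1 L2"
  have sp: "sigma1 L1 L2 > 0" using sigma1_pos[OF L1 L2] sigma1_sg1 by simp
  have "complex_of_real (sigma1 L1 L2) \<in> ball 0 s" using sp s by simp
  with sub have "complex_of_real (sigma1 L1 L2) \<in> F1_ext L1 L2 ` ball 0 (rho1 L1 L2)" by blast
  then obtain z where z: "cmod z < p" and eqz: "F1_ext L1 L2 z = complex_of_real (sigma1 L1 L2)"
    unfolding p_def by (metis dist_0_norm imageE mem_ball)
  have Fp: "F1_ext L1 L2 (complex_of_real p) = complex_of_real (sigma1 L1 L2)"
    using F1_real[OF L2, of p L1] f L2 p_def sigma1_sg1 by simp
  define G1 where "G1 = (\<lambda>z::complex. - complex_of_real L1)"
  define H1 where "H1 = (\<lambda>z. complex_of_real (L2\<^sup>2) * z + complex_of_real (L2 ^ 3 - L2) * Ln (1 - z / complex_of_real L2))"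
  have F: "G1 holomorphic_on ball 0 1 \<and> H1 holomorphic_on ball 0 1 \<and> H1 0 = 0 \<and> deriv H1 0 = 1 \<and>
        (\<forall>z\<in>ball 0 1. cmod (G1 z + z * deriv G1 z) \<le> L1) \<and>
        (\<forall>z\<in>ball 0 1. cmod (deriv H1 z) < L2) \<and>
        (\<forall>z. F1_ext L1 L2 z = complex_of_real ((cmod z)\<^sup>2) * G1 z + H1 z)"
    unfolding G1_def H1_def by (rule F1_facts[OF L1 L2])
  have "complex_of_real ((cmod z)\<^sup>2) * G1 z + H1 z \<noteq>
         complex_of_real ((cmod (complex_of_real (rho1 L1 L2)))\<^sup>2) * G1 (complex_of_real (rho1 L1 L2)) + H1 (complex_of_real (rho1 L1 L2))"
    using p1_sharp_pt[of L1 L2 G1 H1 z] F L1 L2 z p_def by blast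
  thus False using F eqz Fp p_def by metis
qed


lemma H_is_id:
  fixes H :: "complex \<Rightarrow> complex"
  assumes holH: "H holomorphic_on ball 0 1" and H0: "H 0 = 0" and d0: "deriv H 0 = 1"
    and hyp: "(\<forall>z\<in>ball 0 1. cmod (H z) < 1) \<or> (\<forall>z\<in>ball 0 1. cmod (deriv H z) \<le> 1)"
    and z: "z \<in> ball 0 1"
  shows "H z = z"
  using hyp
proof
  assume A: "\<forall>z\<in>ball 0 1. cmod (H z) < 1"
  obtain \<alpha> where al: "\<And>z. cmod z < 1 \<Longrightarrow> H z = \<alpha> * z" "cmod \<alpha> = 1"
    using Schwarz_Lemma(3)[OF holH H0, of 0] A d0 by auto
  have "(H has_field_derivative deriv H 0) (at 0)"
    using holomorphic_derivI[OF holH open_ball, of 0 UNIV] by simp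
  hence "((\<lambda>z. \<alpha> * z) has_field_derivative deriv H 0) (at 0)"
    by (rule has_field_derivative_transform_within_open[where S="ball 0 1"]) (auto intro: al)
  moreover have "((\<lambda>z. \<alpha> * z) has_field_derivative \<alpha>) (at 0)"
    using DERIV_cmult_right[OF DERIV_ident, of \<alpha> 0] by simp
  ultimately have "\<alpha> = 1" using d0 DERIV_unique by metis
  thus "H z = z" using al z by simp
next
  assume B: "\<forall>z\<in>ball 0 1. cmod (deriv H z) \<le> 1"
  have "deriv H constant_on ball 0 1"
    by (rule maximum_modulus_principle[OF holomorphic_deriv[OF holH open_ball] open_ball _ open_ball subset_refl, of 0])
       (use B d0 in auto)
  then obtain c where c: "\<And>w. w \<in> ball 0 1 \<Longrightarrow> deriv H w = c" unfolding constant_on_def by blast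
  have c1: "c = 1" using c[of 0] d0 by simp
  have "\<exists>k. \<forall>x\<in>ball 0 1. H x - x = k"
  proof (rule has_field_derivative_zero_constant)
    show "convex (ball (0::complex) 1)" by simp
    fix x :: complex assume x: "x \<in> ball 0 1"
    have "((\<lambda>x. H x - x) has_field_derivative (deriv H x - 1)) (at x within ball 0 1)"
      by (rule DERIV_diff[OF holomorphic_derivI[OF holH open_ball x] DERIV_ident])
    thus "((\<lambda>x. H x - x) has_field_derivative 0) (at x within ball 0 1)" using c[OF x] c1 by simp
  qed
  then obtain k where k: "\<And>x. x \<in> ball 0 1 \<Longrightarrow> H x - x = k" by blast
  have "k = 0" using k[of 0] H0 by simp
  thus "H z = z" using k[OF z] by simp
qed

lemma rho2_facts:
  assumes L1: "L1 \<ge> 0"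
  shows "0 < rho2 L1" "rho2 L1 \<le> 1" "2 * L1 * rho2 L1 \<le> 1"
    "sigma2 L1 = rho2 L1 - L1 * (rho2 L1)^2"
  using L1 unfolding rho2_def sigma2_def by (auto simp: field_simps)

lemma rho2_lt:
  assumes L1: "L1 \<ge> 0" and r: "0 \<le> r" "r < rho2 L1"
  shows "2 * L1 * r < 1"
proof (cases "L1 \<le> 1/2")
  case True
  hence "r < 1" using r unfolding rho2_def by simp
  moreover have "(2 * L1) * r \<le> 1 * r" using True r(1) by (intro mult_right_mono) auto
  ultimately show ?thesis by simp
next
  case False
  hence "r < 1 / (2 * L1)" using r unfolding rho2_def by simp
  thus ?thesis using False by (simp add: field_simps)
qed

lemma part2_main:
  fixes G H :: "complex \<Rightarrow> complex"
  assumes L1: "L1 \<ge> 0" and holG: "G holomorphic_on ball 0 1"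
    and holH: "H holomorphic_on ball 0 1" and H0: "H 0 = 0" and d0: "deriv H 0 = 1"
    and bdG: "\<forall>z\<in>ball 0 1. cmod (G z + z * deriv G z) \<le> L1"
    and hyp: "(\<forall>z\<in>ball 0 1. cmod (H z) < 1) \<or> (\<forall>z\<in>ball 0 1. cmod (deriv H z) \<le> 1)"
  shows "inj_on (\<lambda>z. complex_of_real ((cmod z)\<^sup>2) * G z + H z) (ball 0 (rho2 L1)) \<and>
           ball 0 (sigma2 L1) \<subseteq> (\<lambda>z. complex_of_real ((cmod z)\<^sup>2) * G z + H z) ` ball 0 (rho2 L1)"
proof
  note f = rho2_facts[OF L1]
  have Hid: "\<And>z. z \<in> ball 0 1 \<Longrightarrow> H z = z" using H_is_id[OF holH H0 d0 hyp] by blast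
  show inj: "inj_on (\<lambda>z. complex_of_real ((cmod z)\<^sup>2) * G z + H z) (ball 0 (rho2 L1))"
  proof (rule inj_onI, rule ccontr)
    fix z1 z2 :: complex
    assume z1: "z1 \<in> ball 0 (rho2 L1)" and z2: "z2 \<in> ball 0 (rho2 L1)"
      and eq: "complex_of_real ((cmod z1)\<^sup>2) * G z1 + H z1 = complex_of_real ((cmod z2)\<^sup>2) * G z2 + H z2"
      and ne: "z1 \<noteq> z2"
    define r where "r = max (cmod z1) (cmod z2)"
    have r0: "0 \<le> r" unfolding r_def by (simp add: le_max_iff_disj)
    have rr: "r < rho2 L1" using z1 z2 unfolding r_def by auto
    have r1: "r < 1" using rr f by simp
    have n1: "cmod z1 \<le> r" and n2: "cmod z2 \<le> r" unfolding r_def by auto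
    have h1: "H z1 = z1" and h2: "H z2 = z2" using Hid z1 z2 r1 n1 n2 by auto
    define d where "d = cmod (z1 - z2)"
    have dpos: "d > 0" using ne d_def by simp
    have Kl: "cmod (z1 * G z1 - z2 * G z2) \<le> L1 * d"
      unfolding d_def by (rule K_lip[OF holG bdG r1 n1 n2])
    have Kb: "cmod (z1 * G z1) \<le> L1 * r"
    proof -
      have "cmod (z1 * G z1) \<le> L1 * cmod z1" using K_bound[OF holG bdG, of z1] n1 r1 by simp
      also have "\<dots> \<le> L1 * r" using n1 L1 by (simp add: mult_left_mono)
      finally show ?thesis .
    qed
    have a1: "d * cmod (z1 * G z1) \<le> d * (L1 * r)" using Kb dpos by (simp add: mult_left_mono)
    have a2: "cmod z2 * cmod (z1 * G z1 - z2 * G z2) \<le> r * (L1 * d)"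
      using Kl n2 r0 by (intro mult_mono) auto
    have a3: "d * (1 - 2 * L1 * r) > 0" using rho2_lt[OF L1 r0 rr] dpos by simp
    have a3': "d * (1 - 2 * L1 * r) = d - d * (L1 * r) - r * (L1 * d)"
      by (simp add: algebra_simps)
    have "cmod (z1 - z2) - cmod ((H z1 - z1) - (H z2 - z2))
         - (cmod (z1 - z2) * cmod (z1 * G z1) + cmod z2 * cmod (z1 * G z1 - z2 * G z2)) \<le> 0"
      using diff_est[where u=z1 and v=z2 and G=G and H=H] eq by simp
    hence "d - (d * cmod (z1 * G z1) + cmod z2 * cmod (z1 * G z1 - z2 * G z2)) \<le> 0"
      using h1 h2 unfolding d_def by simp
    thus False using a1 a2 a3 a3' by linarith
  qed
  show "ball 0 (sigma2 L1) \<subseteq> (\<lambda>z. complex_of_real ((cmod z)\<^sup>2) * G z + H z) ` ball 0 (rho2 L1)"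
  proof -
    have "ball 0 ((\<lambda>t. t - L1 * t^2) (rho2 L1)) \<subseteq> (\<lambda>z. complex_of_real ((cmod z)\<^sup>2) * G z + H z) ` ball 0 (rho2 L1)"
    proof (rule cover[OF f(1) f(2) F_cont[OF holG holH] inj])
      show "complex_of_real ((cmod 0)\<^sup>2) * G 0 + H 0 = 0" using H0 by simp
      show "continuous_on {0..rho2 L1} (\<lambda>t. t - L1 * t^2)" by (intro continuous_intros)
      show "x - L1 * x^2 \<le> y - L1 * y^2" if xy: "0 \<le> x" "x \<le> y" "y \<le> rho2 L1" for x y
      proof -
        have "L1 * (x + y) \<le> L1 * (2 * rho2 L1)" using xy L1 by (intro mult_left_mono) auto
        hence "1 - L1 * (x + y) \<ge> 0" using f(3) by simp
        hence "(y - x) * (1 - L1 * (x + y)) \<ge> 0" using xy by simp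
        thus ?thesis by (simp add: algebra_simps power2_eq_square)
      qed
      fix z :: complex assume z: "cmod z < rho2 L1"
      hence z1: "cmod z < 1" using f by simp
      have "cmod (H z) = cmod z" using Hid z1 by simp
      thus "cmod z - L1 * (cmod z)^2 \<le> cmod (complex_of_real ((cmod z)\<^sup>2) * G z + H z)"
        using F_lower_gen[OF holG bdG z1, of H] by simp
    qed
    thus ?thesis using f(4) by simp
  qed
qed


lemma F2_real: "F2_ext L1 (complex_of_real x) = complex_of_real (L1 * x^2 + x)"
  unfolding F2_ext_def by simp

lemma F2_noninj:
  assumes L1: "L1 \<ge> 0" and r: "rho2 L1 < r" "r \<le> 1"
  shows "\<not> inj_on (F2_ext L1) (ball 0 r)"
proof
  assume inj: "inj_on (F2_ext L1) (ball 0 r)"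
  have big: "\<not> L1 \<le> 1/2" using r unfolding rho2_def by auto
  define p where "p = rho2 L1"
  have p: "p = 1 / (2 * L1)" using big unfolding p_def rho2_def by simp
  have Lp: "2 * L1 * p = 1" using big p by simp
  have p0: "p > 0" using big p by simp
  define e where "e = (r - p) / 2"
  have e0: "e > 0" and er: "e < r - p" using r p_def unfolding e_def by auto
  define x0 where "x0 = - p - e"
  define x1 where "x1 = - p + e"
  have "L1 * x0^2 + x0 = L1 * x1^2 + x1"
  proof -
    have "(L1 * x0^2 + x0) - (L1 * x1^2 + x1) = 2 * e * (2 * L1 * p - 1)"
      unfolding x0_def x1_def by (simp add: power2_eq_square algebra_simps)
    thus ?thesis using Lp by simp
  qed
  hence "F2_ext L1 (of_real x0) = F2_ext L1 (of_real x1)" unfolding F2_real by simp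
  moreover have "\<bar>x0\<bar> < r" unfolding x0_def using p0 e0 er by simp
  hence "of_real x0 \<in> ball (0::complex) r" by simp
  moreover have "\<bar>x1\<bar> < r" unfolding x1_def using p0 e0 er by auto
  hence "of_real x1 \<in> ball (0::complex) r" by simp
  ultimately have "(of_real x0 :: complex) = of_real x1" using inj by (meson inj_onD)
  thus False unfolding x0_def x1_def using e0 by simp
qed

lemma F2_notcover:
  assumes L1: "L1 \<ge> 0" and s: "sigma2 L1 < s"
  shows "\<not> ball 0 s \<subseteq> F2_ext L1 ` ball 0 (rho2 L1)"
proof
  assume sub: "ball 0 s \<subseteq> F2_ext L1 ` ball 0 (rho2 L1)"
  note f = rho2_facts[OF L1]
  define p where "p = rho2 L1"
  have sg: "sigma2 L1 = p - L1 * p^2" using f p_def by simp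
  have sg0: "sigma2 L1 \<ge> 0"
  proof -
    have "L1 * p \<le> 1" using f(3) p_def L1 f(1) by simp
    hence "L1 * p * p \<le> 1 * p" using f(1) p_def by (intro mult_right_mono) auto
    thus ?thesis using sg by (simp add: power2_eq_square)
  qed
  have "complex_of_real (- sigma2 L1) \<in> ball 0 s" using sg0 s by simp
  with sub have "complex_of_real (- sigma2 L1) \<in> F2_ext L1 ` ball 0 (rho2 L1)" by blast
  then obtain z where z: "cmod z < p" and eqz: "F2_ext L1 z = complex_of_real (- sigma2 L1)"
    unfolding p_def by (metis dist_0_norm imageE mem_ball)
  have "Im (F2_ext L1 z) = Im z" unfolding F2_ext_def by simp
  hence imz: "Im z = 0" using eqz by simp
  define x where "x = Re z"
  have zx: "z = complex_of_real x" unfolding x_def using imz by (simp add: complex_eq_iff)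
  have xa: "\<bar>x\<bar> < p" using z zx by simp
  have "complex_of_real (L1 * x^2 + x) = complex_of_real (- sigma2 L1)"
    by (metis F2_real eqz zx)
  hence "L1 * x^2 + x = - sigma2 L1" by (simp only: of_real_eq_iff)
  hence e0: "(x + p) * (L1 * (x - p) + 1) = 0" using sg by (simp add: power2_eq_square algebra_simps)
  have "x + p > 0" using xa by simp
  moreover have "L1 * (x - p) + 1 > 0"
  proof (cases "L1 = 0")
    case True thus ?thesis by simp
  next
    case False
    hence "L1 > 0" using L1 by simp
    hence "L1 * (x - p) > L1 * (- 2 * p)" using xa by (intro mult_strict_left_mono) auto
    thus ?thesis using f(3) p_def by simp
  qed
  ultimately have "(x + p) * (L1 * (x - p) + 1) > 0" by simp
  thus False using e0 by simp
qed

theorem corollary2p1: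
  fixes L1 L2 :: real
  assumes L1: "L1 \<ge> 0" and L2: "L2 > 1"
  shows
   "(\<forall>G H :: complex \<Rightarrow> complex.
       G holomorphic_on ball 0 1 \<and> H holomorphic_on ball 0 1 \<and> H 0 = 0 \<and> deriv H 0 = 1 \<and>
       (\<forall>z\<in>ball 0 1. cmod (G z + z * deriv G z) \<le> L1) \<and>
       (\<forall>z\<in>ball 0 1. cmod (deriv H z) < L2)
       \<longrightarrow> inj_on (\<lambda>z. complex_of_real ((cmod z)\<^sup>2) * G z + H z) (ball 0 (rho1 L1 L2)) \<and>
           ball 0 (sigma1 L1 L2) \<subseteq> (\<lambda>z. complex_of_real ((cmod z)\<^sup>2) * G z + H z) ` ball 0 (rho1 L1 L2))
    \<and>
    (let G1 = (\<lambda>z::complex. - complex_of_real L1);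
         H1 = (\<lambda>z. complex_of_real (L2\<^sup>2) * z + complex_of_real (L2 ^ 3 - L2) * Ln (1 - z / complex_of_real L2))
     in G1 holomorphic_on ball 0 1 \<and> H1 holomorphic_on ball 0 1 \<and> H1 0 = 0 \<and> deriv H1 0 = 1 \<and>
        (\<forall>z\<in>ball 0 1. cmod (G1 z + z * deriv G1 z) \<le> L1) \<and>
        (\<forall>z\<in>ball 0 1. cmod (deriv H1 z) < L2) \<and>
        (\<forall>z. F1_ext L1 L2 z = complex_of_real ((cmod z)\<^sup>2) * G1 z + H1 z))
    \<and>
    (\<forall>r. rho1 L1 L2 < r \<and> r \<le> 1 \<longrightarrow> \<not> inj_on (F1_ext L1 L2) (ball 0 r))
    \<and>
    (\<forall>s. sigma1 L1 L2 < s \<longrightarrow> \<not> ball 0 s \<subseteq> F1_ext L1 L2 ` ball 0 (rho1 L1 L2))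
    \<and>
    (\<forall>G H :: complex \<Rightarrow> complex.
       G holomorphic_on ball 0 1 \<and> H holomorphic_on ball 0 1 \<and> H 0 = 0 \<and> deriv H 0 = 1 \<and>
       (\<forall>z\<in>ball 0 1. cmod (G z + z * deriv G z) \<le> L1) \<and>
       ((\<forall>z\<in>ball 0 1. cmod (H z) < 1) \<or> (\<forall>z\<in>ball 0 1. cmod (deriv H z) \<le> 1))
       \<longrightarrow> inj_on (\<lambda>z. complex_of_real ((cmod z)\<^sup>2) * G z + H z) (ball 0 (rho2 L1)) \<and>
           ball 0 (sigma2 L1) \<subseteq> (\<lambda>z. complex_of_real ((cmod z)\<^sup>2) * G z + H z) ` ball 0 (rho2 L1))
    \<and>
    (let G2 = (\<lambda>z::complex. complex_of_real L1); H2 = (\<lambda>z::complex. z)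
     in (\<forall>z\<in>ball 0 1. cmod (G2 z + z * deriv G2 z) \<le> L1) \<and>
        (\<forall>z\<in>ball 0 1. cmod (H2 z) < 1) \<and> (\<forall>z\<in>ball 0 1. cmod (deriv H2 z) \<le> 1) \<and>
        (\<forall>z. F2_ext L1 z = complex_of_real ((cmod z)\<^sup>2) * G2 z + H2 z))
    \<and>
    (\<forall>r. rho2 L1 < r \<and> r \<le> 1 \<longrightarrow> \<not> inj_on (F2_ext L1) (ball 0 r))
    \<and>
    (\<forall>s. sigma2 L1 < s \<longrightarrow> \<not> ball 0 s \<subseteq> F2_ext L1 ` ball 0 (rho2 L1))"
proof (intro conjI allI impI)
  show "inj_on (\<lambda>z. complex_of_real ((cmod z)\<^sup>2) * G z + H z) (ball 0 (rho1 L1 L2))"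
    if h: "G holomorphic_on ball 0 1 \<and> H holomorphic_on ball 0 1 \<and> H 0 = 0 \<and> deriv H 0 = 1 \<and>
       (\<forall>z\<in>ball 0 1. cmod (G z + z * deriv G z) \<le> L1) \<and>
       (\<forall>z\<in>ball 0 1. cmod (deriv H z) < L2)" for G H :: "complex \<Rightarrow> complex"
    using part1_main[OF L1 L2, of G H] h by blast
  show "ball 0 (sigma1 L1 L2) \<subseteq> (\<lambda>z. complex_of_real ((cmod z)\<^sup>2) * G z + H z) ` ball 0 (rho1 L1 L2)"
    if h: "G holomorphic_on ball 0 1 \<and> H holomorphic_on ball 0 1 \<and> H 0 = 0 \<and> deriv H 0 = 1 \<and>
       (\<forall>z\<in>ball 0 1. cmod (G z + z * deriv G z) \<le> L1) \<and>
       (\<forall>z\<in>ball 0 1. cmod (deriv H z) < L2)" for G H :: "complex \<Rightarrow> complex"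
    using part1_main[OF L1 L2, of G H] h by blast
  show "let G1 = (\<lambda>z::complex. - complex_of_real L1);
         H1 = (\<lambda>z. complex_of_real (L2\<^sup>2) * z + complex_of_real (L2 ^ 3 - L2) * Ln (1 - z / complex_of_real L2))
     in G1 holomorphic_on ball 0 1 \<and> H1 holomorphic_on ball 0 1 \<and> H1 0 = 0 \<and> deriv H1 0 = 1 \<and>
        (\<forall>z\<in>ball 0 1. cmod (G1 z + z * deriv G1 z) \<le> L1) \<and>
        (\<forall>z\<in>ball 0 1. cmod (deriv H1 z) < L2) \<and>
        (\<forall>z. F1_ext L1 L2 z = complex_of_real ((cmod z)\<^sup>2) * G1 z + H1 z)"
    unfolding Let_def by (rule F1_facts[OF L1 L2])
  show "\<not> inj_on (F1_ext L1 L2) (ball 0 r)" if "rho1 L1 L2 < r \<and> r \<le> 1" for r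
    using F1_noninj[OF L1 L2] that by blast
  show "\<not> ball 0 s \<subseteq> F1_ext L1 L2 ` ball 0 (rho1 L1 L2)" if "sigma1 L1 L2 < s" for s
    using F1_notcover[OF L1 L2 that] .
  show "inj_on (\<lambda>z. complex_of_real ((cmod z)\<^sup>2) * G z + H z) (ball 0 (rho2 L1))"
    if h: "G holomorphic_on ball 0 1 \<and> H holomorphic_on ball 0 1 \<and> H 0 = 0 \<and> deriv H 0 = 1 \<and>
       (\<forall>z\<in>ball 0 1. cmod (G z + z * deriv G z) \<le> L1) \<and>
       ((\<forall>z\<in>ball 0 1. cmod (H z) < 1) \<or> (\<forall>z\<in>ball 0 1. cmod (deriv H z) \<le> 1))" for G H :: "complex \<Rightarrow> complex"
    using part2_main[OF L1, of G H] h by blast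
  show "ball 0 (sigma2 L1) \<subseteq> (\<lambda>z. complex_of_real ((cmod z)\<^sup>2) * G z + H z) ` ball 0 (rho2 L1)"
    if h: "G holomorphic_on ball 0 1 \<and> H holomorphic_on ball 0 1 \<and> H 0 = 0 \<and> deriv H 0 = 1 \<and>
       (\<forall>z\<in>ball 0 1. cmod (G z + z * deriv G z) \<le> L1) \<and>
       ((\<forall>z\<in>ball 0 1. cmod (H z) < 1) \<or> (\<forall>z\<in>ball 0 1. cmod (deriv H z) \<le> 1))" for G H :: "complex \<Rightarrow> complex"
    using part2_main[OF L1, of G H] h by blast
  show "let G2 = (\<lambda>z::complex. complex_of_real L1); H2 = (\<lambda>z::complex. z)
     in (\<forall>z\<in>ball 0 1. cmod (G2 z + z * deriv G2 z) \<le> L1) \<and>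
        (\<forall>z\<in>ball 0 1. cmod (H2 z) < 1) \<and> (\<forall>z\<in>ball 0 1. cmod (deriv H2 z) \<le> 1) \<and>
        (\<forall>z. F2_ext L1 z = complex_of_real ((cmod z)\<^sup>2) * G2 z + H2 z)"
    unfolding Let_def F2_ext_def using L1 by (simp add: mult.commute)
  show "\<not> inj_on (F2_ext L1) (ball 0 r)" if "rho2 L1 < r \<and> r \<le> 1" for r
    using F2_noninj[OF L1] that by blast
  show "\<not> ball 0 s \<subseteq> F2_ext L1 ` ball 0 (rho2 L1)" if "sigma2 L1 < s" for s
    using F2_notcover[OF L1 that] .
qed

end
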